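(* Let $\mathcal U,\mathbf f$ be as in the context, $0<\varepsilon\le 1$ and $B\subset\mathcal U$ a ball. Then for all sufficiently large $t>0$, $$N\big(B\setminus\mathfrak M(\varepsilon,t);\varepsilon,t\big)\le 2(\varepsilon e^{-t})^{-d/2}\mathcal L_d(B)\sup_{\mathbf x_0\in\mathfrak M'(\varepsilon,t)\cap B}N\big(\Delta_t(\mathbf x_0)\cap B;\varepsilon,t\big).$$
   Context: Setup: $\mathcal U\subset\mathbb R^d$ open, $\mathbf f:\mathcal U\to\mathbb R^n$ a $C^2$ map $\mathbf f(\mathbf x)=(x_1,\dots,x_d,f_1(\mathbf x),\dots,f_m(\mathbf x))$ with first and second partials of the $f_k$ bounded by $M\ge1$. $N(\Delta;\varepsilon,t)$ is the number of $(\mathbf p,q)\in\mathbb Z^n\times\mathbb Z$ with $0<q<e^t$ and $\inf_{\mathbf x\in\Delta\cap\mathcal U}\|\mathbf f(\mathbf x)-\mathbf p/q\|_\infty<\varepsilon e^{-t}$. $\Delta_t(\mathbf x_0)=\{\mathbf x\in\mathbb R^d:\|\mathbf x-\mathbf x_0\|_\infty\le(\varepsilon e^{-t})^{1/2}\}$. With $\sigma_k$ the $k\times k$ antidiagonal permutation matrix, $U(\mathbf y)=\begin{bmatrix}I_n&\sigma_n\mathbf y^T\\0&1\end{bmatrix}$, $Z(\Theta)=\begin{bmatrix}I_m&\sigma_m\Theta\sigma_d&0\\0&I_d&0\\0&0&1\end{bmatrix}$, $J(\mathbf x)=[\partial f_i/\partial x_j(\mathbf x)]$, $\mathbf u(\mathbf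 x)=Z(-J(\mathbf x))U(\mathbf f(\mathbf x))$, $\phi=(\varepsilon^ne^t)^{1/(n+1)}$, $g_t=\mathrm{diag}(\phi\varepsilon^{-1},\dots,\phi\varepsilon^{-1},\phi e^{-t})$, $b_t=\mathrm{diag}\big(e^{\frac{dt}{2(n+1)}}I_m,e^{-\frac{(m+1)t}{2(n+1)}}I_d,e^{\frac{dt}{2(n+1)}}\big)$ and $\lambda_{n+1}$ the last successive minimum of the Euclidean unit ball: $\mathfrak M_0(\varepsilon,t)=\{\mathbf x\in\mathcal U:\lambda_{n+1}(b_tg_t\mathbf u(\mathbf x)\mathbb Z^{n+1})>\phi e^{\frac{dt}{2(n+1)}}\}$, $\mathfrak M(\varepsilon,t)=\bigcup_{\mathbf x\in\mathfrak M_0(\varepsilon,t)}B(\mathbf x,\varepsilon e^{-t/2})\cap\mathcal U$, and $\mathfrak M'(\varepsilon,t)=\mathcal U\setminus\mathfrak M(\varepsilon,t)$. *)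

theory Defs
  imports "HOL-Analysis.Analysis"
begin

text \<open>Coordinates of R^n are labelled by the type 'm + 'd:
  Inl k stands for the coordinate f_k, Inr j for the coordinate x_j.
  Coordinates of R^(n+1) are labelled by ('m + 'd) option, None being the last one.\<close>

definition partial :: "(real^'d \<Rightarrow> real) \<Rightarrow> 'd \<Rightarrow> real^'d \<Rightarrow> real" where
  "partial g j x = frechet_derivative g (at x) (axis j 1)"

definition fvec :: "('m \<Rightarrow> real^'d \<Rightarrow> real) \<Rightarrow> real^'d \<Rightarrow> ('m + 'd \<Rightarrow> real)" where
  "fvec f x = (\<lambda>i. case i of Inl k \<Rightarrow> f k x | Inr j \<Rightarrow> x $ j)"

text \<open>N(Delta; eps, t); the infimum condition inf_{x in Delta cap U} |F(x) - p/q|_infty < eps e^-t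
  is written out as the existence of such an x.\<close>
definition Ncount :: "(real^'d) set \<Rightarrow> ('m::finite \<Rightarrow> real^'d \<Rightarrow> real) \<Rightarrow> (real^'d) set
     \<Rightarrow> real \<Rightarrow> real \<Rightarrow> nat" where
  "Ncount U f \<Delta> \<epsilon> t = card {(p :: 'm + 'd \<Rightarrow> int, q :: int).
       0 < q \<and> real_of_int q < exp t \<and>
       (\<exists>x\<in>\<Delta> \<inter> U. (\<forall>i. \<bar>fvec f x i - real_of_int (p i) / real_of_int q\<bar> < \<epsilon> * exp (- t)))}"

definition Delta_t :: "real \<Rightarrow> real \<Rightarrow> real^'d \<Rightarrow> (real^'d) set" where
  "Delta_t \<epsilon> t x0 = {x. \<forall>j. \<bar>x $ j - x0 $ j\<bar> \<le> (\<epsilon> * exp (- t)) powr (1/2)}"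

text \<open>U(y) = [[I_n, sigma_n y^T],[0,1]] with coordinates relabelled as above.\<close>
definition Umat :: "('m::finite + 'd::finite \<Rightarrow> real) \<Rightarrow> real^('m + 'd) option^('m + 'd) option" where
  "Umat y = (\<chi> i l. if i = l then 1 else
      (case (i, l) of (Some a, None) \<Rightarrow> y a | _ \<Rightarrow> 0))"

text \<open>Z(Theta) = [[I_m, sigma_m Theta sigma_d, 0],[0, I_d, 0],[0,0,1]] with coordinates relabelled.\<close>
definition Zmat :: "('m::finite \<Rightarrow> 'd::finite \<Rightarrow> real) \<Rightarrow> real^('m + 'd) option^('m + 'd) option" where
  "Zmat \<Theta> = (\<chi> i l. if i = l then 1 else
      (case (i, l) of (Some (Inl k), Some (Inr j)) \<Rightarrow> \<Theta> k j | _ \<Rightarrow> 0))"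

definition umat :: "('m::finite \<Rightarrow> real^'d \<Rightarrow> real) \<Rightarrow> real^'d \<Rightarrow> real^('m + 'd) option^('m + 'd) option" where
  "umat f x = Zmat (\<lambda>k j. - partial (f k) j x) ** Umat (fvec f x)"

definition phi :: "nat \<Rightarrow> real \<Rightarrow> real \<Rightarrow> real" where
  "phi n \<epsilon> t = (\<epsilon> ^ n * exp t) powr (1 / real (n + 1))"

definition gmat :: "real \<Rightarrow> real \<Rightarrow> real^('m::finite + 'd::finite) option^('m + 'd) option" where
  "gmat \<epsilon> t = (let n = CARD('m) + CARD('d) in
     (\<chi> i l. if i = l then (if i = None then phi n \<epsilon> t * exp (- t) else phi n \<epsilon> t / \<epsilon>) else 0))"

definition bmat :: "real \<Rightarrow> real^('m::finite + 'd::finite) option^('m + 'd) option" where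
  "bmat t = (let n = CARD('m) + CARD('d); d = CARD('d); m = CARD('m) in
     (\<chi> i l. if i = l then
        (case i of Some (Inr _) \<Rightarrow> exp (- (real m + 1) * t / (2 * (real n + 1)))
                 | _ \<Rightarrow> exp (real d * t / (2 * (real n + 1))))
      else 0))"

definition lattice_of :: "real^'k^'k \<Rightarrow> (real^'k) set" where
  "lattice_of A = range (\<lambda>z::'k \<Rightarrow> int. A *v (\<chi> i. real_of_int (z i)))"

definition succ_min :: "nat \<Rightarrow> (real^'k) set \<Rightarrow> real" where
  "succ_min k \<Lambda> = Inf {r. r > 0 \<and>
      (\<exists>S. S \<subseteq> \<Lambda> \<inter> cball 0 r \<and> finite S \<and> card S = k \<and> independent S)}"

definition M0set :: "(real^'d) set \<Rightarrow> ('m::finite \<Rightarrow> real^'d::finite \<Rightarrow> real) \<Rightarrow> real \<Rightarrow> real \<Rightarrow> (real^'d) set" where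
  "M0set U f \<epsilon> t = {x \<in> U.
     succ_min (CARD('m) + CARD('d) + 1)
       (lattice_of (bmat t ** gmat \<epsilon> t ** umat f x))
     > phi (CARD('m) + CARD('d)) \<epsilon> t * exp (real CARD('d) * t / (2 * (real (CARD('m) + CARD('d)) + 1)))}"

definition Mset :: "(real^'d) set \<Rightarrow> ('m::finite \<Rightarrow> real^'d::finite \<Rightarrow> real) \<Rightarrow> real \<Rightarrow> real \<Rightarrow> (real^'d) set" where
  "Mset U f \<epsilon> t = (\<Union>x\<in>M0set U f \<epsilon> t. ball x (\<epsilon> * exp (- t / 2))) \<inter> U"

definition Mset' :: "(real^'d) set \<Rightarrow> ('m::finite \<Rightarrow> real^'d::finite \<Rightarrow> real) \<Rightarrow> real \<Rightarrow> real \<Rightarrow> (real^'d) set" where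
  "Mset' U f \<epsilon> t = U - Mset U f \<epsilon> t"

end

theory Submission
  imports Defs
begin

lemma f_bounded_ball:
  fixes U :: "(real^'d) set" and g :: "real^'d \<Rightarrow> real"
  assumes g_diff: "\<forall>x\<in>U. g differentiable (at x)"
    and bnd: "\<forall>j. \<forall>x\<in>U. \<bar>partial g j x\<bar> \<le> M"
    and B_sub: "ball c r \<subseteq> U" and x: "x \<in> ball c r"
  shows "\<bar>g x - g c\<bar> \<le> M * CARD('d) * r"
proof -
  let ?D = "\<lambda>x. frechet_derivative g (at x)"
  have dx: "dist c x < r" using x by (simp only: mem_ball)
  have r: "r > 0" using dx zero_le_dist[of c x] by linarith
  have cU: "c \<in> U" using B_sub centre_in_ball[of c r] r by blast
  have "\<bar>partial g undefined c\<bar> \<le> M" using bnd cU by blast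
  hence M0: "M \<ge> 0" using abs_ge_zero[of "partial g undefined c"] by linarith
  have der: "(g has_derivative ?D y) (at y)" if "y \<in> U" for y
    using g_diff that frechet_derivative_works by blast
  have on: "onorm (?D y) \<le> M * CARD('d)" if yU: "y \<in> U" for y
  proof (rule onorm_le)
    fix h :: "real^'d"
    have lin: "linear (?D y)" using der[OF yU] has_derivative_linear by blast
    have "?D y h = ?D y (\<Sum>i\<in>UNIV. h$i *s axis i 1)" by (simp only: basis_expansion)
    also have "\<dots> = (\<Sum>i\<in>UNIV. h$i * partial g i y)"
      using lin by (simp add: linear_sum linear_scale partial_def scalar_mult_eq_scaleR)
    finally have eq: "?D y h = (\<Sum>i\<in>UNIV. h$i * partial g i y)" .
    have "norm (?D y h) \<le> (\<Sum>i\<in>UNIV. \<bar>h$i * partial g i y\<bar>)"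
      unfolding eq real_norm_def by (rule sum_abs)
    also have "\<dots> \<le> (\<Sum>i\<in>(UNIV::'d set). norm h * M)"
    proof (rule sum_mono)
      fix i
      have a: "\<bar>h$i\<bar> \<le> norm h" by (rule component_le_norm_cart)
      have b: "\<bar>partial g i y\<bar> \<le> M" using bnd yU by blast
      have "\<bar>h$i\<bar> * \<bar>partial g i y\<bar> \<le> norm h * M"
        by (rule mult_mono[OF a b]) simp_all
      thus "\<bar>h$i * partial g i y\<bar> \<le> norm h * M" by (simp only: abs_mult)
    qed
    also have "\<dots> = M * CARD('d) * norm h" by simp
    finally show "norm (?D y h) \<le> M * CARD('d) * norm h" .
  qed
  have cb: "c \<in> ball c r" using r by simp
  have "norm (g x - g c) \<le> M * CARD('d) * norm (x - c)"
  proof (rule differentiable_bound[of "ball c r" g ?D])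
    show "convex (ball c r)" by (rule convex_ball)
    fix y assume y: "y \<in> ball c r"
    hence yU: "y \<in> U" using B_sub by blast
    show "(g has_derivative ?D y) (at y within ball c r)"
      by (rule has_derivative_at_withinI[OF der[OF yU]])
    show "onorm (?D y) \<le> M * CARD('d)" by (rule on[OF yU])
  qed (rule x, rule cb)
  also have "\<dots> \<le> M * CARD('d) * r"
  proof (rule mult_left_mono)
    have "norm (x - c) = dist c x" using dist_commute[of c x] dist_norm[of x c] by simp
    thus "norm (x - c) \<le> r" using dx by linarith
    show "0 \<le> M * real CARD('d)" using M0 by simp
  qed
  finally show ?thesis by simp
qed

lemma finite_Nset:
  fixes f :: "'m::finite \<Rightarrow> real^'d \<Rightarrow> real" and A :: "(real^'d) set"
  assumes bd: "\<forall>x\<in>A. \<forall>i. \<bar>fvec f x i\<bar> \<le> Bd"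
  shows "finite {(p :: 'm + 'd \<Rightarrow> int, q :: int). 0 < q \<and> real_of_int q < exp t \<and>
       (\<exists>x\<in>A. (\<forall>i. \<bar>fvec f x i - real_of_int (p i) / real_of_int q\<bar> < e))}"
proof -
  define C where "C = exp t * (\<bar>Bd\<bar> + \<bar>e\<bar>)"
  define N where "N = \<lceil>C\<rceil>"
  define Q where "Q = \<lceil>exp t\<rceil>"
  have sub: "{(p :: 'm + 'd \<Rightarrow> int, q :: int). 0 < q \<and> real_of_int q < exp t \<and>
       (\<exists>x\<in>A. (\<forall>i. \<bar>fvec f x i - real_of_int (p i) / real_of_int q\<bar> < e))}
     \<subseteq> Pi\<^sub>E UNIV (\<lambda>_. {-N..N}) \<times> {0..Q}"
  proof clarify
    fix p :: "'m + 'd \<Rightarrow> int" and q :: int and x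
    assume q: "0 < q" "real_of_int q < exp t" and x: "x \<in> A"
      and cl: "\<forall>i. \<bar>fvec f x i - real_of_int (p i) / real_of_int q\<bar> < e"
    have "q \<le> Q" unfolding Q_def using q by linarith
    moreover have "p i \<in> {-N..N}" for i
    proof -
      have "\<bar>real_of_int (p i) / q\<bar> \<le> \<bar>Bd\<bar> + \<bar>e\<bar>"
      proof -
        have "\<bar>fvec f x i\<bar> \<le> Bd" using bd x by blast
        thus ?thesis using cl[rule_format, of i] by linarith
      qed
      moreover have qp: "real_of_int q > 0" using q by simp
      moreover have "\<bar>real_of_int (p i)\<bar> / q = \<bar>real_of_int (p i) / q\<bar>"
        by (rule abs_div_pos[OF qp])
      ultimately have "\<bar>real_of_int (p i)\<bar> / q \<le> (\<bar>Bd\<bar> + \<bar>e\<bar>)"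
        by linarith
      hence "\<bar>real_of_int (p i)\<bar> \<le> q * (\<bar>Bd\<bar> + \<bar>e\<bar>)"
        using qp by (simp add: pos_divide_le_eq mult.commute)
      also have "\<dots> \<le> C" unfolding C_def using q by (intro mult_right_mono) auto
      finally have "\<bar>real_of_int (p i)\<bar> \<le> C" .
      hence "- C \<le> real_of_int (p i) \<and> real_of_int (p i) \<le> C" by linarith
      hence "- N \<le> p i \<and> p i \<le> N" unfolding N_def by linarith
      thus ?thesis by simp
    qed
    ultimately show "p \<in> Pi\<^sub>E UNIV (\<lambda>_. {-N..N}) \<and> q \<in> {0..Q}" using q by auto
  qed
  show ?thesis
    by (rule finite_subset[OF sub]) (intro finite_cartesian_product finite_PiE finite_atLeastAtMost_int finite_class.finite_UNIV)
qed

lemma fvec_bounded: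
  fixes U :: "(real^'d) set" and f :: "'m::finite \<Rightarrow> real^'d \<Rightarrow> real"
  assumes f_diff: "\<forall>k. \<forall>x\<in>U. f k differentiable (at x)"
    and df_bound: "\<forall>k j. \<forall>x\<in>U. \<bar>partial (f k) j x\<bar> \<le> M"
    and B_sub: "ball c r \<subseteq> U"
  shows "\<exists>Bd. \<forall>x\<in>ball c r. \<forall>i. \<bar>fvec f x i\<bar> \<le> Bd"
proof -
  define S where "S = (\<Sum>k\<in>UNIV. \<bar>f k c\<bar>)"
  define Bd where "Bd = S + M * CARD('d) * r + norm c + r"
  have "\<bar>fvec f x i\<bar> \<le> Bd" if x: "x \<in> ball c r" for x i
  proof -
    have dx: "dist c x < r" using x by (simp only: mem_ball)
    have r: "r > 0" using dx zero_le_dist[of c x] by linarith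
    have cU: "c \<in> U" using B_sub centre_in_ball[of c r] r by blast
    have "\<bar>partial (f undefined) undefined c\<bar> \<le> M" using df_bound cU by blast
    hence M0: "M \<ge> 0" using abs_ge_zero[of "partial (f undefined) undefined c"] by linarith
    have S0: "S \<ge> 0" unfolding S_def by (simp add: sum_nonneg)
    have P0: "0 \<le> M * CARD('d) * r" using r M0 by simp
    have nc: "norm c \<ge> 0" by simp
    show ?thesis
    proof (cases i)
      case (Inl k)
      have d: "\<forall>x\<in>U. f k differentiable (at x)" using f_diff by blast
      have b: "\<forall>j. \<forall>x\<in>U. \<bar>partial (f k) j x\<bar> \<le> M" using df_bound by blast
      have 1: "\<bar>f k x - f k c\<bar> \<le> M * CARD('d) * r"
        by (rule f_bounded_ball[OF d b B_sub x])
      have 2: "\<bar>f k c\<bar> \<le> S"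
        unfolding S_def by (rule member_le_sum) simp_all
      have "fvec f x i = f k x" using Inl by (simp add: fvec_def)
      thus ?thesis using 1 2 nc r unfolding Bd_def by linarith
    next
      case (Inr j)
      have "\<bar>x $ j\<bar> \<le> norm x" by (rule component_le_norm_cart)
      also have "norm x \<le> norm c + r"
      proof -
        have "norm x \<le> norm c + norm (x - c)" by (rule norm_triangle_sub)
        moreover have "norm (x - c) = dist c x" using dist_commute[of c x] dist_norm[of x c] by simp
        moreover have "dist c x < r" by (rule dx)
        ultimately show ?thesis by linarith
      qed
      finally have "\<bar>x $ j\<bar> \<le> norm c + r" .
      moreover have "fvec f x i = x $ j" using Inr by (simp add: fvec_def)
      ultimately show ?thesis using S0 P0 unfolding Bd_def by linarith
    qed
  qed
  thus ?thesis by blast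
qed

definition bx :: "real \<Rightarrow> ('d::finite \<Rightarrow> int) \<Rightarrow> (real^'d) set" where
  "bx s k = box (\<chi> j. s * k j) (\<chi> j. s * (k j + 1))"

lemma measure_bx:
  fixes s :: real
  assumes s: "s > 0"
  shows "measure lborel (bx s (k::'d::finite \<Rightarrow> int)) = s ^ CARD('d)"
proof -
  have comp: "((\<chi> j. s * (k j + 1)) - (\<chi> j. s * k j)) \<bullet> b = s" if bB: "b \<in> Basis" for b :: "real^'d"
  proof -
    obtain i where "b = axis i 1" using axis_inverse[OF bB] by blast
    thus ?thesis by (simp add: inner_axis algebra_simps)
  qed
  have le: "(\<chi> j. s * k j) \<bullet> b \<le> (\<chi> j. s * (k j + 1)) \<bullet> b" if "b \<in> Basis" for b :: "real^'d"
    using comp[OF that] s by (simp add: inner_diff_left)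
  have "measure lborel (bx s k) = (\<Prod>b\<in>(Basis::(real^'d) set). s)"
    unfolding bx_def by (subst measure_lborel_box) (use le comp in auto)
  also have "\<dots> = s ^ CARD('d)" by simp
  finally show ?thesis .
qed

lemma bx_disjoint:
  fixes s :: real
  assumes s: "s > 0" and ne: "k \<noteq> k'"
  shows "disjnt (bx s k) (bx s (k' :: 'd::finite \<Rightarrow> int))"
proof -
  have mem: "s * k j < y $ j \<and> y $ j < s * (k j + 1)" if "y \<in> bx s k" for y k j
    using that unfolding bx_def mem_box_cart by simp
  obtain j where j: "k j \<noteq> k' j" using ne by auto
  have gen: "disjnt (bx s a) (bx s b)" if ab: "a j < b j" for a b :: "'d \<Rightarrow> int"
  proof -
    have "real_of_int (a j) + 1 \<le> real_of_int (b j)" using ab by linarith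
    hence le: "s * (a j + 1) \<le> s * b j" using s by (intro mult_left_mono) simp_all
    show ?thesis unfolding disjnt_def
    proof (rule equals0I)
      fix y assume "y \<in> bx s a \<inter> bx s b"
      hence "y $ j < s * (a j + 1)" "s * b j < y $ j" using mem by blast+
      thus False using le by linarith
    qed
  qed
  show ?thesis
  proof (cases "k j < k' j")
    case True thus ?thesis by (rule gen)
  next
    case False
    hence "k' j < k j" using j by linarith
    thus ?thesis using gen disjnt_sym by blast
  qed
qed

lemma bx_sub:
  fixes x c :: "real^'d::finite" and s r :: real
  assumes s: "s > 0" and x: "x \<in> ball c r"
  shows "bx s (\<lambda>j. \<lfloor>x $ j / s\<rfloor>) \<subseteq> cball c (r + CARD('d) * s)"
proof
  fix y :: "real^'d" assume y: "y \<in> bx s (\<lambda>j. \<lfloor>x $ j / s\<rfloor>)"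
  have cj: "\<bar>y $ j - x $ j\<bar> \<le> s" for j
  proof -
    have y1: "s * \<lfloor>x $ j / s\<rfloor> < y $ j" and y2: "y $ j < s * (\<lfloor>x $ j / s\<rfloor> + 1)"
      using y unfolding bx_def by (auto simp: mem_box_cart)
    have f1: "real_of_int \<lfloor>x $ j / s\<rfloor> \<le> x $ j / s" by (rule of_int_floor_le)
    have f2: "x $ j / s < real_of_int \<lfloor>x $ j / s\<rfloor> + 1" by (rule real_of_int_floor_add_one_gt)
    have "s * real_of_int \<lfloor>x $ j / s\<rfloor> \<le> x $ j" using f1 s by (simp add: le_divide_eq mult.commute)
    moreover have "x $ j < s * (real_of_int \<lfloor>x $ j / s\<rfloor> + 1)"
    proof -
      have "s * (x $ j / s) < s * (real_of_int \<lfloor>x $ j / s\<rfloor> + 1)"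
        by (rule mult_strict_left_mono[OF f2 s])
      thus ?thesis using s by simp
    qed
    ultimately show ?thesis using y1 y2 by (simp add: distrib_left)
  qed
  have "norm (y - x) \<le> (\<Sum>j\<in>UNIV. \<bar>(y - x) $ j\<bar>)" by (rule norm_le_l1_cart)
  also have "\<dots> \<le> (\<Sum>j\<in>(UNIV::'d set). s)" by (rule sum_mono) (use cj in simp)
  also have "\<dots> = CARD('d) * s" by simp
  finally have "norm (y - x) \<le> CARD('d) * s" .
  moreover have "dist c x < r" using x by simp
  ultimately show "y \<in> cball c (r + CARD('d) * s)"
  proof -
    have "dist c y \<le> dist c x + dist x y" by (rule dist_triangle)
    moreover have "dist x y = norm (y - x)" using dist_commute[of x y] dist_norm[of y x] by simp
    ultimately have "dist c y \<le> r + CARD('d) * s"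
      using \<open>dist c x < r\<close> \<open>norm (y - x) \<le> CARD('d) * s\<close> by linarith
    thus ?thesis by (simp only: mem_cball)
  qed
qed

lemma cell_count:
  fixes L :: "(real^'d::finite) set" and c :: "real^'d" and s r :: real
  assumes s: "s > 0" and r: "r > 0" and L: "L \<subseteq> ball c r"
  shows "finite ((\<lambda>x. (\<lambda>j. \<lfloor>x $ j / s\<rfloor>)) ` L) \<and>
    real (card ((\<lambda>x. (\<lambda>j. \<lfloor>x $ j / s\<rfloor>)) ` L)) * s ^ CARD('d)
      \<le> unit_ball_vol CARD('d) * (r + CARD('d) * s) ^ CARD('d)"
proof -
  let ?kf = "\<lambda>x::real^'d. (\<lambda>j. \<lfloor>x $ j / s\<rfloor>)"
  let ?V = "unit_ball_vol CARD('d) * (r + CARD('d) * s) ^ CARD('d)"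
  have rho: "r + CARD('d) * s \<ge> 0" using r s by simp
  have mc: "measure lborel (cball c (r + CARD('d) * s)) = ?V"
  proof -
    have "0 \<le> ?V" using rho by simp
    thus ?thesis using emeasure_cball[OF rho, of c] by (simp add: measure_def)
  qed
  have key: "real (card G) * s ^ CARD('d) \<le> ?V" if G: "G \<subseteq> ?kf ` L" "finite G" for G
  proof -
    have "real (card G) * s ^ CARD('d) = (\<Sum>k\<in>G. measure lborel (bx s k))"
      by (simp add: measure_bx[OF s])
    also have "\<dots> = measure lborel (\<Union>k\<in>G. bx s k)"
      by (rule measure_UNION'[symmetric]) (use G bx_disjoint[OF s] in \<open>auto simp: bx_def pairwise_def\<close>)
    also have "\<dots> \<le> measure lborel (cball c (r + CARD('d) * s))"
    proof (rule measure_mono_fmeasurable)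
      show "(\<Union>k\<in>G. bx s k) \<subseteq> cball c (r + CARD('d) * s)"
        using G(1) L bx_sub[OF s] by blast
      show "(\<Union>k\<in>G. bx s k) \<in> sets lborel" unfolding bx_def by auto
      show "cball c (r + CARD('d) * s) \<in> fmeasurable lborel" by (rule fmeasurable_compact) simp
    qed
    finally show ?thesis using mc by simp
  qed
  have sp: "s ^ CARD('d) > 0" using s by simp
  have "finite (?kf ` L) \<and> card (?kf ` L) \<le> nat \<lfloor>?V / s ^ CARD('d)\<rfloor>"
  proof (rule finite_if_finite_subsets_card_bdd)
    fix G assume "G \<subseteq> ?kf ` L" "finite G"
    hence "real (card G) \<le> ?V / s ^ CARD('d)" using key sp by (simp add: le_divide_eq)
    thus "card G \<le> nat \<lfloor>?V / s ^ CARD('d)\<rfloor>" by linarith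
  qed
  hence fin: "finite (?kf ` L)" by (rule conjunct1)
  show ?thesis using key[OF order_refl fin] fin by (rule conjI[rotated])
qed

lemma ev_small:
  fixes \<epsilon> r :: real and d :: nat
  assumes eps: "0 < \<epsilon>" and r: "0 < r"
  shows "\<forall>\<^sub>F t in at_top. (r + d * (\<epsilon> * exp (- t)) powr (1/2)) ^ d < 2 * r ^ d"
proof -
  have eq: "(\<epsilon> * exp (- t)) powr (1/2) = sqrt (\<epsilon> * exp (- t))" for t
    using eps by (simp add: powr_half_sqrt)
  have e0: "((\<lambda>t. exp (- t)) \<longlongrightarrow> (0::real)) at_top"
    by (rule filterlim_compose[OF exp_at_bot filterlim_uminus_at_bot_at_top])
  have "((\<lambda>t. sqrt (\<epsilon> * exp (- t))) \<longlongrightarrow> sqrt (\<epsilon> * 0)) at_top"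
    by (intro tendsto_real_sqrt tendsto_mult tendsto_const e0)
  hence "((\<lambda>t. (r + d * (\<epsilon> * exp (- t)) powr (1/2)) ^ d) \<longlongrightarrow> (r + d * sqrt (\<epsilon> * 0)) ^ d) at_top"
    unfolding eq by (intro tendsto_power tendsto_add tendsto_mult tendsto_const)
  moreover have "(r + d * sqrt (\<epsilon> * 0)) ^ d < 2 * r ^ d" using r by simp
  ultimately show ?thesis by (rule order_tendstoD)
qed

theorem lemma5p3:
  fixes U :: "(real^'d) set" and f :: "'m::finite \<Rightarrow> real^'d \<Rightarrow> real"
    and M \<epsilon> r :: real and c :: "real^'d"
  assumes U_open: "open U"
    and f_diff: "\<forall>k. \<forall>x\<in>U. f k differentiable (at x)"
    and df_diff: "\<forall>k j. \<forall>x\<in>U. partial (f k) j differentiable (at x)"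
    and d2f_cont: "\<forall>k i j. continuous_on U (partial (partial (f k) j) i)"
    and M_ge: "M \<ge> 1"
    and df_bound: "\<forall>k j. \<forall>x\<in>U. \<bar>partial (f k) j x\<bar> \<le> M"
    and d2f_bound: "\<forall>k i j. \<forall>x\<in>U. \<bar>partial (partial (f k) j) i x\<bar> \<le> M"
    and eps_pos: "0 < \<epsilon>" and eps_le: "\<epsilon> \<le> 1"
    and r_pos: "0 < r" and B_sub: "ball c r \<subseteq> U"
  shows "\<forall>\<^sub>F t in at_top.
    real (Ncount U f (ball c r - Mset U f \<epsilon> t) \<epsilon> t)
      \<le> 2 * (\<epsilon> * exp (- t)) powr (- real CARD('d) / 2) * measure lborel (ball c r)
          * real (SUP x0 \<in> Mset' U f \<epsilon> t \<inter> ball c r. Ncount U f (Delta_t \<epsilon> t x0 \<inter> ball c r) \<epsilon> t)"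
proof -
  let ?d = "CARD('d)"
  define \<omega> where "\<omega> = unit_ball_vol ?d"
  have \<omega>0: "\<omega> \<ge> 0" unfolding \<omega>_def by simp
  have mB: "measure lborel (ball c r) = \<omega> * r ^ ?d"
  proof -
    have "0 \<le> \<omega> * r ^ ?d" using \<omega>0 r_pos by simp
    thus ?thesis using emeasure_ball[of r c] r_pos unfolding \<omega>_def by (simp add: measure_def)
  qed
  obtain Bd where Bd: "\<forall>x\<in>ball c r. \<forall>i. \<bar>fvec f x i\<bar> \<le> Bd"
    using fvec_bounded[OF f_diff df_bound B_sub] by blast
  define NS where "NS = (\<lambda>A t. {(p :: 'm + 'd \<Rightarrow> int, q :: int).
       0 < q \<and> real_of_int q < exp t \<and>
       (\<exists>x\<in>A \<inter> U. (\<forall>i. \<bar>fvec f x i - real_of_int (p i) / real_of_int q\<bar> < \<epsilon> * exp (- t)))})"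
  have Nc: "Ncount U f A \<epsilon> t = card (NS A t)" for A t unfolding Ncount_def NS_def by simp
  have NS_mono: "A \<subseteq> A' \<Longrightarrow> NS A t \<subseteq> NS A' t" for A A' t unfolding NS_def by blast
  have NS_fin: "A \<subseteq> ball c r \<Longrightarrow> finite (NS A t)" for A t
  proof -
    assume A: "A \<subseteq> ball c r"
    have "\<forall>x\<in>A \<inter> U. \<forall>i. \<bar>fvec f x i\<bar> \<le> Bd" using A Bd by blast
    from finite_Nset[OF this, of t "\<epsilon> * exp (- t)"] show ?thesis unfolding NS_def by simp
  qed
  show ?thesis
  proof (rule eventually_mono[OF ev_small[OF eps_pos r_pos, of ?d]])
    fix t :: real
    assume small: "(r + ?d * (\<epsilon> * exp (- t)) powr (1/2)) ^ ?d < 2 * r ^ ?d"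
    define s where "s = (\<epsilon> * exp (- t)) powr (1/2)"
    have s: "s > 0" unfolding s_def using eps_pos by simp
    define L where "L = ball c r - Mset U f \<epsilon> t"
    have L_sub: "L \<subseteq> ball c r" unfolding L_def by blast
    have L_sub': "L \<subseteq> Mset' U f \<epsilon> t \<inter> ball c r"
      unfolding L_def Mset'_def using B_sub by blast
    define kf where "kf = (\<lambda>x::real^'d. (\<lambda>j. \<lfloor>x $ j / s\<rfloor>))"
    define K where "K = kf ` L"
    have cc: "finite K \<and> real (card K) * s ^ ?d \<le> \<omega> * (r + ?d * s) ^ ?d"
      using cell_count[OF s r_pos L_sub] unfolding K_def kf_def \<omega>_def by simp
    hence finK: "finite K" by simp
    have cardK: "real (card K) * s ^ ?d \<le> 2 * measure lborel (ball c r)"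
    proof -
      have "\<omega> * (r + ?d * s) ^ ?d \<le> \<omega> * (2 * r ^ ?d)"
        using small \<omega>0 unfolding s_def by (intro mult_left_mono) auto
      thus ?thesis using cc mB by simp
    qed
    define x0 where "x0 = (\<lambda>k. SOME x. x \<in> L \<and> kf x = k)"
    have x0: "x0 k \<in> L \<and> kf (x0 k) = k" if "k \<in> K" for k
    proof -
      have "\<exists>x. x \<in> L \<and> kf x = k" using that unfolding K_def by blast
      thus ?thesis unfolding x0_def by (rule someI_ex)
    qed
    define SUPV where "SUPV = (SUP x0 \<in> Mset' U f \<epsilon> t \<inter> ball c r. Ncount U f (Delta_t \<epsilon> t x0 \<inter> ball c r) \<epsilon> t)"
    have cover: "NS L t \<subseteq> (\<Union>k\<in>K. NS (Delta_t \<epsilon> t (x0 k) \<inter> ball c r) t)"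
    proof
      fix pq assume "pq \<in> NS L t"
      then obtain p q x where pq: "pq = (p, q)" "0 < q" "real_of_int q < exp t" and x: "x \<in> L \<inter> U"
        and cl: "\<forall>i. \<bar>fvec f x i - real_of_int (p i) / real_of_int q\<bar> < \<epsilon> * exp (- t)"
        unfolding NS_def by blast
      let ?k = "kf x"
      have kK: "?k \<in> K" using x unfolding K_def by blast
      have xk: "x0 ?k \<in> L" "kf (x0 ?k) = ?k" using x0[OF kK] by auto
      have "x \<in> Delta_t \<epsilon> t (x0 ?k)"
        unfolding Delta_t_def
      proof (clarify)
        fix j
        have fe: "\<lfloor>x0 ?k $ j / s\<rfloor> = \<lfloor>x $ j / s\<rfloor>" using xk(2) unfolding kf_def by metis
        have "\<bar>x $ j / s - x0 ?k $ j / s\<bar> < 1" using fe by linarith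
        moreover have d1: "x $ j / s - x0 ?k $ j / s = (x $ j - x0 ?k $ j) / s"
          by (rule diff_divide_distrib[symmetric])
        moreover have d2: "\<bar>(x $ j - x0 ?k $ j) / s\<bar> = \<bar>x $ j - x0 ?k $ j\<bar> / s"
          by (rule abs_div_pos[OF s, symmetric])
        ultimately have "\<bar>x $ j - x0 ?k $ j\<bar> / s < 1" by (simp only:)
        hence "\<bar>x $ j - x0 ?k $ j\<bar> < 1 * s" by (simp only: pos_divide_less_eq[OF s])
        hence "\<bar>x $ j - x0 ?k $ j\<bar> < s" by simp
        thus "\<bar>x $ j - x0 ?k $ j\<bar> \<le> (\<epsilon> * exp (- t)) powr (1/2)" unfolding s_def by simp
      qed
      hence "x \<in> (Delta_t \<epsilon> t (x0 ?k) \<inter> ball c r) \<inter> U" using x L_sub by blast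
      hence "pq \<in> NS (Delta_t \<epsilon> t (x0 ?k) \<inter> ball c r) t" unfolding NS_def using pq cl by blast
      thus "pq \<in> (\<Union>k\<in>K. NS (Delta_t \<epsilon> t (x0 k) \<inter> ball c r) t)" using kK by blast
    qed
    have bdd: "bdd_above ((\<lambda>y. Ncount U f (Delta_t \<epsilon> t y \<inter> ball c r) \<epsilon> t) ` (Mset' U f \<epsilon> t \<inter> ball c r))"
    proof (rule bdd_aboveI2)
      fix y
      have "card (NS (Delta_t \<epsilon> t y \<inter> ball c r) t) \<le> card (NS (ball c r) t)"
        by (rule card_mono[OF NS_fin[OF order_refl] NS_mono]) blast
      thus "Ncount U f (Delta_t \<epsilon> t y \<inter> ball c r) \<epsilon> t \<le> card (NS (ball c r) t)" by (simp add: Nc)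
    qed
    have each: "card (NS (Delta_t \<epsilon> t (x0 k) \<inter> ball c r) t) \<le> SUPV" if "k \<in> K" for k
    proof -
      have "x0 k \<in> Mset' U f \<epsilon> t \<inter> ball c r" using x0[OF that] L_sub' by blast
      from cSUP_upper[OF this bdd] show ?thesis unfolding SUPV_def by (simp add: Nc)
    qed
    have "card (NS L t) \<le> card (\<Union>k\<in>K. NS (Delta_t \<epsilon> t (x0 k) \<inter> ball c r) t)"
      by (rule card_mono[OF _ cover]) (use finK NS_fin in blast)
    also have "\<dots> \<le> (\<Sum>k\<in>K. card (NS (Delta_t \<epsilon> t (x0 k) \<inter> ball c r) t))"
      by (rule card_UN_le[OF finK])
    also have "\<dots> \<le> (\<Sum>k\<in>K. SUPV)" by (rule sum_mono) (rule each)
    also have "\<dots> = card K * SUPV" by simp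
    finally have main: "real (Ncount U f L \<epsilon> t) \<le> real (card K) * real SUPV"
      by (simp add: Nc flip: of_nat_mult)
    have sd: "s ^ ?d = (\<epsilon> * exp (- t)) powr (real ?d / 2)"
      unfolding s_def using eps_pos by (subst powr_power) auto
    have sdp: "s ^ ?d > 0" using s by simp
    have pw: "(\<epsilon> * exp (- t)) powr (- real ?d / 2) = 1 / s ^ ?d"
    proof -
      have "- real ?d / 2 = - (real ?d / 2)" by simp
      hence "(\<epsilon> * exp (- t)) powr (- real ?d / 2) = inverse ((\<epsilon> * exp (- t)) powr (real ?d / 2))"
        by (simp only: powr_minus)
      thus ?thesis unfolding sd[symmetric] by (simp only: inverse_eq_divide)
    qed
    have "real (card K) \<le> 2 * measure lborel (ball c r) / s ^ ?d"
      using cardK sdp by (simp add: le_divide_eq)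
    hence "real (card K) * real SUPV \<le> (2 * measure lborel (ball c r) / s ^ ?d) * real SUPV"
      by (rule mult_right_mono) simp
    also have "\<dots> = 2 * (\<epsilon> * exp (- t)) powr (- real ?d / 2) * measure lborel (ball c r) * real SUPV"
      unfolding pw by simp
    finally show "real (Ncount U f (ball c r - Mset U f \<epsilon> t) \<epsilon> t)
      \<le> 2 * (\<epsilon> * exp (- t)) powr (- real CARD('d) / 2) * measure lborel (ball c r)
          * real (SUP x0 \<in> Mset' U f \<epsilon> t \<inter> ball c r. Ncount U f (Delta_t \<epsilon> t x0 \<inter> ball c r) \<epsilon> t)"
      using main unfolding L_def SUPV_def by linarith
  qed
qed
end
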